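(* Let $P$ be a finite set of points in $\mathbb{R}^2$ in general position. Let $(u,v)$ be adjacent vertices of the convex hull of $P$, let $t$ be the other neighbor of $u$ on the hull, and let $p\in A(u)\setminus A(v)$. If $v$ is deleted from $P$, and $v'$ denotes the new neighbor of $u$ on the convex hull of $P\setminus\{v\}$ (replacing $v$), then $p$ lies in the triangle $\triangle(t,u,v')$, i.e. $p$ remains within $u$'s triangle.
   Context: For consecutive hull vertices $(t,u,v)$, $u$'s triangle is $\triangle(t,u,v)$. Convex layers: $L^1$ is the set of vertices of the convex hull of $P$, $L^2$ the set of vertices of the convex hull of $P\setminus L^1$. A point $p$ is active for $u\in L^1$ if, upon deleting $u$ and recomputing the first and second convex layers, $p$ moves to the first layer; $A(u)$ is the set of points active for $u$. *)

theory Defs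
  imports "HOL-Analysis.Analysis"
begin

type_synonym point = "real \<times> real"

definition general_position :: "point set \<Rightarrow> bool" where
  "general_position P \<longleftrightarrow>
     (\<forall>a\<in>P. \<forall>b\<in>P. \<forall>c\<in>P. a \<noteq> b \<and> a \<noteq> c \<and> b \<noteq> c \<longrightarrow> \<not> collinear {a, b, c})"

definition layer1 :: "point set \<Rightarrow> point set" where
  "layer1 P = {p \<in> P. p extreme_point_of (convex hull P)}"

definition layer2 :: "point set \<Rightarrow> point set" where
  "layer2 P = layer1 (P - layer1 P)"

definition hull_adjacent :: "point set \<Rightarrow> point \<Rightarrow> point \<Rightarrow> bool" where
  "hull_adjacent P u v \<longleftrightarrow> u \<in> layer1 P \<and> v \<in> layer1 P \<and> u \<noteq> v \<and>
     closed_segment u v face_of convex hull P"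

definition active :: "point set \<Rightarrow> point \<Rightarrow> point \<Rightarrow> bool" where
  "active P u p \<longleftrightarrow> u \<in> layer1 P \<and> p \<in> layer2 P \<and> p \<in> layer1 (P - {u})"

definition active_set :: "point set \<Rightarrow> point \<Rightarrow> point set" where
  "active_set P u = {p. active P u p}"

end

theory Submission
  imports Defs
begin

definition cr :: "point \<Rightarrow> point \<Rightarrow> real" where
  "cr a b = fst a * snd b - snd a * fst b"

lemma cr_zero_collinear:
  assumes "cr (b - a) (c - a) = 0"
  shows "collinear {a, b, c}"
proof -
  have "collinear {0, b - a, c - a}"
  proof (cases "b - a = 0")
    case True then show ?thesis by (simp add: collinear_lemma)
  next
    case False
    obtain a1 a2 where A: "b - a = (a1, a2)" by (cases "b - a") auto
    obtain b1 b2 where B: "c - a = (b1, b2)" by (cases "c - a") auto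
    have d: "a1 * b2 = a2 * b1" using assms A B by (simp add: cr_def)
    have "a1 \<noteq> 0 \<or> a2 \<noteq> 0" using False A by (auto simp: zero_prod_def)
    then have "\<exists>k. c - a = k *\<^sub>R (b - a)"
    proof
      assume h: "a1 \<noteq> 0"
      show ?thesis
        by (rule exI[of _ "b1 / a1"]) (use h d in \<open>simp add: A B field_simps\<close>)
    next
      assume h: "a2 \<noteq> 0"
      show ?thesis
        by (rule exI[of _ "b2 / a2"]) (use h d in \<open>simp add: A B field_simps\<close>)
    qed
    then show ?thesis by (simp add: collinear_lemma)
  qed
  then have "collinear {b - a, 0, c - a}" by (simp add: insert_commute)
  then show ?thesis
    using collinear_3[of b a c] by (simp add: insert_commute)
qed

lemma coords:
  assumes "cr A B \<noteq> 0"
  shows "X = (cr X B / cr A B) *\<^sub>R A + (cr A X / cr A B) *\<^sub>R B"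
proof -
  obtain a1 a2 b1 b2 x1 x2 where e: "A = (a1,a2)" "B = (b1,b2)" "X = (x1,x2)"
    by (cases A, cases B, cases X) auto
  have d: "a1 * b2 - a2 * b1 \<noteq> 0" using assms e by (simp add: cr_def)
  define D where "D = a1 * b2 - a2 * b1"
  have dD: "D \<noteq> 0" using d D_def by simp
  have 1: "x1 = ((x1 * b2 - x2 * b1) / D) * a1 + ((a1 * x2 - a2 * x1) / D) * b1"
  proof -
    have "x1 * D = (x1 * b2 - x2 * b1) * a1 + (a1 * x2 - a2 * x1) * b1"
      unfolding D_def by (simp add: algebra_simps)
    then have "x1 = ((x1 * b2 - x2 * b1) * a1 + (a1 * x2 - a2 * x1) * b1) / D"
      using dD by (simp add: eq_divide_eq)
    then show ?thesis by (simp add: add_divide_distrib)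
  qed
  have 2: "x2 = ((x1 * b2 - x2 * b1) / D) * a2 + ((a1 * x2 - a2 * x1) / D) * b2"
  proof -
    have "x2 * D = (x1 * b2 - x2 * b1) * a2 + (a1 * x2 - a2 * x1) * b2"
      unfolding D_def by (simp add: algebra_simps)
    then have "x2 = ((x1 * b2 - x2 * b1) * a2 + (a1 * x2 - a2 * x1) * b2) / D"
      using dD by (simp add: eq_divide_eq)
    then show ?thesis by (simp add: add_divide_distrib)
  qed
  show ?thesis using 1 2 by (simp add: e cr_def D_def)
qed

lemma edge_support:
  fixes P :: "point set"
  assumes "finite P" "closed_segment a b face_of convex hull P"
  shows "\<exists>w c. (\<forall>x\<in>P. w \<bullet> x \<le> c) \<and>
      (\<forall>x\<in>convex hull P. w \<bullet> x = c \<longrightarrow> x \<in> closed_segment a b) \<and>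
      w \<bullet> a = c \<and> w \<bullet> b = c"
proof -
  have "closed_segment a b exposed_face_of convex hull P"
    using exposed_face_of_polyhedron[OF polyhedron_convex_hull[OF assms(1)]] assms(2) by blast
  then obtain w c where 1: "convex hull P \<subseteq> {x. w \<bullet> x \<le> c}"
    and 2: "closed_segment a b = convex hull P \<inter> {x. w \<bullet> x = c}"
    unfolding exposed_face_of_def by blast
  have "a \<in> closed_segment a b" "b \<in> closed_segment a b" by auto
  then have "w \<bullet> a = c" "w \<bullet> b = c" using 2 by blast+
  moreover have "\<forall>x\<in>P. w \<bullet> x \<le> c" using 1 hull_subset[of P convex] by blast
  ultimately show ?thesis using 2 by blast
qed

lemma seg_cr:
  assumes "x \<in> closed_segment a b"
  shows "cr (x - a) (b - a) = 0" "cr (b - a) (x - a) = 0"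
proof -
  obtain s where "x = (1 - s) *\<^sub>R a + s *\<^sub>R b" using assms by (auto simp: in_segment)
  then have "x - a = s *\<^sub>R (b - a)" by (simp add: algebra_simps)
  then show "cr (x - a) (b - a) = 0" "cr (b - a) (x - a) = 0"
    by (cases "b - a", simp add: cr_def)+
qed

lemma not_extreme_in:
  assumes "p extreme_point_of convex hull S" "T \<subseteq> S - {p}" "p \<in> convex hull T"
  shows False
proof -
  have "convex (convex hull S - {p})"
    using assms(1) extreme_point_of_stillconvex[of "convex hull S" p] by simp
  moreover have "T \<subseteq> convex hull S - {p}" using assms(2) hull_subset[of S convex] by blast
  ultimately have "convex hull T \<subseteq> convex hull S - {p}" by (simp add: hull_minimal)
  then show False using assms(3) by blast
qed

lemma alg:
  fixes a b m s p1 u1 t1 v1 r1 :: real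
  assumes "m \<noteq> 0" "s > 1" "m \<le> 1" "s = a + b"
    "p1 = u1 + a * (t1 - u1) + b * (v1 - u1)" "p1 = (1 - m) * u1 + m * r1"
  shows "p1 = ((1 - m) * s / (s - m)) * ((a / s) * t1 + (b / s) * v1) + (1 - (1 - m) * s / (s - m)) * r1"
proof -
  have sm: "s - m \<noteq> 0" using assms by auto
  have s0: "s \<noteq> 0" using assms by auto
  have e: "a * t1 + b * v1 = p1 - u1 + s * u1" using assms by (simp add: algebra_simps)
  have "(a / s) * t1 + (b / s) * v1 = (a * t1 + b * v1) / s" by (simp add: add_divide_distrib)
  also have "\<dots> = (p1 - u1 + s * u1) / s" using e by simp
  finally have q: "(a / s) * t1 + (b / s) * v1 = (p1 - u1 + s * u1) / s" .
  have A: "((1 - m) * s / (s - m)) * ((a / s) * t1 + (b / s) * v1) = (1 - m) * (p1 - u1 + s * u1) / (s - m)"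
    unfolding q using s0 by simp
  have th: "1 - (1 - m) * s / (s - m) = m * (s - 1) / (s - m)"
    using sm by (simp add: field_simps)
  have B: "(1 - (1 - m) * s / (s - m)) * r1 = (s - 1) * (m * r1) / (s - m)"
    unfolding th by simp
  have "(1 - m) * (p1 - u1 + s * u1) + (s - 1) * (m * r1) = (s - m) * p1"
  proof -
    have mr: "m * r1 = p1 - (1 - m) * u1" using assms(6) by simp
    show ?thesis unfolding mr by (simp add: algebra_simps)
  qed
  then have "(1 - m) * (p1 - u1 + s * u1) / (s - m) + (s - 1) * (m * r1) / (s - m) = p1"
    using sm by (simp add: add_divide_distrib[symmetric])
  then show ?thesis unfolding A B by simp
qed

lemma layer1_sub: "layer1 X \<subseteq> X" by (auto simp: layer1_def)

theorem lemma2: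
  fixes P :: "point set" and t u v v' p :: point
  assumes "finite P"
    and "general_position P"
    and "hull_adjacent P u v"
    and "hull_adjacent P t u"
    and "t \<noteq> v"
    and "p \<in> active_set P u - active_set P v"
    and "hull_adjacent (P - {v}) u v'"
    and "v' \<noteq> t"
  shows "p \<in> convex hull {t, u, v'}"
proof (rule ccontr)
  assume notin: "p \<notin> convex hull {t, u, v'}"
  have uL: "u \<in> layer1 P" and vL: "v \<in> layer1 P" and uv: "u \<noteq> v"
    using assms(3) by (auto simp: hull_adjacent_def)
  have tL: "t \<in> layer1 P" and tu: "t \<noteq> u" and ftu: "closed_segment t u face_of convex hull P"
    using assms(4) by (auto simp: hull_adjacent_def)
  have v'L: "v' \<in> layer1 (P - {v})" and uv': "u \<noteq> v'"
    and fuv': "closed_segment u v' face_of convex hull (P - {v})"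
    using assms(7) by (auto simp: hull_adjacent_def)
  have pA: "active P u p" and pnA: "\<not> active P v p" using assms(6) by (auto simp: active_set_def)
  have pL2: "p \<in> layer2 P" and pLu: "p \<in> layer1 (P - {u})" using pA by (auto simp: active_def)
  have pP: "p \<in> P" and pnL: "p \<notin> layer1 P"
    using pL2 layer1_sub[of "P - layer1 P"] by (auto simp: layer2_def)
  have pnLv: "p \<notin> layer1 (P - {v})" using pnA uL vL pL2 by (auto simp: active_def)
  have uP: "u \<in> P" "v \<in> P" "t \<in> P" using uL vL tL layer1_sub by blast+
  have v'P: "v' \<in> P" "v' \<noteq> v" using v'L layer1_sub by blast+
  have pu: "p \<noteq> u" "p \<noteq> v" "p \<noteq> t" using pnL uL vL tL by auto
  have pv': "p \<noteq> v'" using pnLv v'L by auto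
  have pext: "p extreme_point_of convex hull (P - {u})" using pLu by (simp add: layer1_def)
  have pnext: "\<not> p extreme_point_of convex hull (P - {v})" using pnLv pP pu by (simp add: layer1_def)
  have ncol: "\<And>a b c. a \<in> P \<Longrightarrow> b \<in> P \<Longrightarrow> c \<in> P \<Longrightarrow> a \<noteq> b \<Longrightarrow> a \<noteq> c \<Longrightarrow> b \<noteq> c
      \<Longrightarrow> \<not> collinear {a, b, c}"
    using assms(2) by (simp add: general_position_def)
  define A where "A = t - u"
  define B where "B = v' - u"
  define D where "D = cr A B"
  have D0: "D \<noteq> 0"
  proof
    assume "D = 0"
    then have "collinear {u, t, v'}" using cr_zero_collinear[of t u v'] by (simp add: D_def A_def B_def)
    then show False using ncol[of u t v'] uP v'P tu uv' assms(8) by auto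
  qed
  obtain w1 c1 where w1: "\<forall>x\<in>P. w1 \<bullet> x \<le> c1"
      "\<forall>x\<in>convex hull P. w1 \<bullet> x = c1 \<longrightarrow> x \<in> closed_segment t u"
      "w1 \<bullet> t = c1" "w1 \<bullet> u = c1"
    using edge_support[OF assms(1) ftu] by blast
  obtain w3 c3 where w3: "\<forall>x\<in>P - {v}. w3 \<bullet> x \<le> c3"
      "\<forall>x\<in>convex hull (P - {v}). w3 \<bullet> x = c3 \<longrightarrow> x \<in> closed_segment u v'"
      "w3 \<bullet> u = c3" "w3 \<bullet> v' = c3"
    using edge_support[of "P - {v}" u v'] assms(1) fuv' by blast
  have w1v': "w1 \<bullet> v' < c1"
  proof -
    have "w1 \<bullet> v' \<le> c1" using w1(1) v'P by auto
    moreover have "w1 \<bullet> v' \<noteq> c1"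
    proof
      assume "w1 \<bullet> v' = c1"
      then have "v' \<in> closed_segment t u" using w1(2) v'P hull_inc[of v' P] by blast
      then have "cr (v' - t) (u - t) = 0" by (rule seg_cr)
      then have "collinear {t, v', u}" by (rule cr_zero_collinear)
      then show False using ncol[of t v' u] uP v'P tu uv' assms(8) by auto
    qed
    ultimately show ?thesis by simp
  qed
  have w3t: "w3 \<bullet> t < c3"
  proof -
    have tP': "t \<in> P - {v}" using uP assms(5) by auto
    have "w3 \<bullet> t \<le> c3" using w3(1) tP' by auto
    moreover have "w3 \<bullet> t \<noteq> c3"
    proof
      assume "w3 \<bullet> t = c3"
      then have "t \<in> closed_segment u v'" using w3(2) tP' hull_inc[of t "P - {v}"] by blast
      then have "cr (t - u) (v' - u) = 0" by (rule seg_cr)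
      then show False using D0 by (simp add: D_def A_def B_def)
    qed
    ultimately show ?thesis by simp
  qed
  define al where "al x = cr (x - u) B / D" for x
  define be where "be x = cr A (x - u) / D" for x
  have decomp: "x - u = al x *\<^sub>R A + be x *\<^sub>R B" for x
    using coords[of A B "x - u"] D0 by (simp add: al_def be_def D_def)
  have alpos: "al x \<ge> 0" if "x \<in> P - {v}" for x
  proof -
    have "w3 \<bullet> (x - u) = al x * (w3 \<bullet> A) + be x * (w3 \<bullet> B)"
      by (subst decomp) (simp add: inner_add_right)
    also have "\<dots> = al x * (w3 \<bullet> t - c3)"
      using w3 by (simp add: A_def B_def inner_diff_right)
    finally have eq: "w3 \<bullet> (x - u) = al x * (w3 \<bullet> t - c3)" .
    have "w3 \<bullet> x \<le> c3" using w3(1) that by blast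
    then have "w3 \<bullet> (x - u) \<le> 0" using w3(3) by (simp add: inner_diff_right)
    then have "al x * (w3 \<bullet> t - c3) \<le> 0" using eq by simp
    then show ?thesis using w3t by (simp add: mult_le_0_iff)
  qed
  have bepos: "be x \<ge> 0" if "x \<in> P" for x
  proof -
    have "w1 \<bullet> (x - u) = al x * (w1 \<bullet> A) + be x * (w1 \<bullet> B)"
      by (subst decomp) (simp add: inner_add_right)
    also have "\<dots> = be x * (w1 \<bullet> v' - c1)"
      using w1 by (simp add: A_def B_def inner_diff_right)
    finally have eq: "w1 \<bullet> (x - u) = be x * (w1 \<bullet> v' - c1)" .
    have "w1 \<bullet> x \<le> c1" using w1(1) that by blast
    then have "w1 \<bullet> (x - u) \<le> 0" using w1(4) by (simp add: inner_diff_right)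
    then have "be x * (w1 \<bullet> v' - c1) \<le> 0" using eq by simp
    then show ?thesis using w1v' by (simp add: mult_le_0_iff)
  qed
  define a where "a = al p"
  define b where "b = be p"
  define s where "s = a + b"
  have pPv: "p \<in> P - {v}" using pP pu by auto
  have a0: "a \<ge> 0" using alpos[OF pPv] by (simp add: a_def)
  have b0: "b \<ge> 0" using bepos[OF pP] by (simp add: b_def)
  have pdec: "p = u + a *\<^sub>R (t - u) + b *\<^sub>R (v' - u)"
    using decomp[of p] by (simp add: a_def b_def A_def B_def algebra_simps)
  have s1: "s > 1"
  proof (rule ccontr)
    assume "\<not> s > 1"
    then have "0 \<le> 1 - a - b" by (simp add: s_def)
    moreover have "p = a *\<^sub>R t + (1 - a - b) *\<^sub>R u + b *\<^sub>R v'"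
      using pdec by (simp add: algebra_simps)
    ultimately have "p \<in> convex hull {t, u, v'}"
      unfolding convex_hull_3 using a0 b0 by (intro CollectI exI[of _ a] exI[of _ "1 - a - b"] exI[of _ b]) auto
    then show False using notin by blast
  qed
  have pin: "p \<in> convex hull (P - {v} - {p})"
  proof (rule ccontr)
    assume "p \<notin> convex hull (P - {v} - {p})"
    then have "p extreme_point_of convex hull (insert p (P - {v} - {p}))"
      using extreme_point_of_convex_hull_insert[of "P - {v} - {p}" p] assms(1) by auto
    moreover have "insert p (P - {v} - {p}) = P - {v}" using pPv by auto
    ultimately show False using pnext by simp
  qed
  define S' where "S' = P - {v} - {p} - {u}"
  have eqS: "P - {v} - {p} = insert u S'" using uP uv pu by (auto simp: S'_def)
  have ne: "S' \<noteq> {}" using uP assms(5) pu tu by (auto simp: S'_def)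
  have "p \<in> convex hull (insert u S')" using pin eqS by simp
  then obtain l m r where lm: "l \<ge> 0" "m \<ge> 0" "l + m = 1"
    and r: "r \<in> convex hull S'" and pr: "p = l *\<^sub>R u + m *\<^sub>R r"
    unfolding convex_hull_insert[OF ne] by blast
  have m0: "m \<noteq> 0" using pr lm pu by auto
  define T where "T = P - {u} - {p}"
  have cT: "convex (convex hull T)" by simp
  have rT: "r \<in> convex hull T"
    using r hull_mono[of S' T convex] by (auto simp: T_def S'_def)
  have tT: "t \<in> convex hull T" "v' \<in> convex hull T"
    using uP v'P tu uv' pu pv' hull_inc[of _ T] by (auto simp: T_def)
  define q where "q = (a / s) *\<^sub>R t + (b / s) *\<^sub>R v'"
  have qT: "q \<in> convex hull T"
    unfolding q_def using tT s1 a0 b0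
    by (intro convexD[OF cT]) (auto simp: s_def add_divide_distrib[symmetric])
  define th where "th = (1 - m) * s / (s - m)"
  have th0: "th \<ge> 0" "th \<le> 1"
    using s1 lm by (auto simp: th_def field_simps mult_le_cancel_left1)
  have "p = th *\<^sub>R q + (1 - th) *\<^sub>R r"
  proof -
    have l: "l = 1 - m" using lm by simp
    have m1: "m \<le> 1" using lm by simp
    have h1a: "fst p = fst u + a * (fst t - fst u) + b * (fst v' - fst u)"
      by (subst pdec) simp
    have h1b: "fst p = (1 - m) * fst u + m * fst r"
      by (subst pr) (simp add: l)
    have c1: "fst p = th * ((a / s) * fst t + (b / s) * fst v') + (1 - th) * fst r"
      unfolding th_def by (rule alg[OF m0 s1 m1 s_def h1a h1b])
    have h2a: "snd p = snd u + a * (snd t - snd u) + b * (snd v' - snd u)"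
      by (subst pdec) simp
    have h2b: "snd p = (1 - m) * snd u + m * snd r"
      by (subst pr) (simp add: l)
    have c2: "snd p = th * ((a / s) * snd t + (b / s) * snd v') + (1 - th) * snd r"
      unfolding th_def by (rule alg[OF m0 s1 m1 s_def h2a h2b])
    show ?thesis using c1 c2 by (simp add: prod_eq_iff q_def)
  qed
  then have "p \<in> convex hull T"
    using convexD[OF cT qT rT th0(1), of "1 - th"] th0 by simp
  then show False using not_extreme_in[OF pext, of T] by (auto simp: T_def)
qed

end
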